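(* Let $G$ be an orderable group and let $U\subseteq G$ be a finite set of pairwise commensurable elements. Then $\langle U\rangle$ is a cyclic subgroup of $G$.
   Context: A group is orderable if it has a linear order $\le$ such that $g\le h$ implies $xgy\le xhy$ for all $g,h,x,y$. Two elements $g,h$ are commensurable if $g^x=h^y$ for some $x,y\in\mathbb{Z}\setminus\{0\}$. *)

theory Defs
  imports "HOL-Algebra.Algebra"
begin

definition orderable :: "('a, 'b) monoid_scheme \<Rightarrow> bool" where
  "orderable G \<longleftrightarrow> (\<exists>r. linear_order_on (carrier G) r \<and>
     (\<forall>g\<in>carrier G. \<forall>h\<in>carrier G. \<forall>x\<in>carrier G. \<forall>y\<in>carrier G.
        (g, h) \<in> r \<longrightarrow> (x \<otimes>\<^bsub>G\<^esub> g \<otimes>\<^bsub>G\<^esub> y, x \<otimes>\<^bsub>G\<^esub> h \<otimes>\<^bsub>G\<^esub> y) \<in> r))"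

definition commensurable :: "('a, 'b) monoid_scheme \<Rightarrow> 'a \<Rightarrow> 'a \<Rightarrow> bool" where
  "commensurable G g h \<longleftrightarrow>
     (\<exists>x y :: int. x \<noteq> 0 \<and> y \<noteq> 0 \<and> g [^]\<^bsub>G\<^esub> (x::int) = h [^]\<^bsub>G\<^esub> (y::int))"

end

theory Submission
  imports Defs
begin

locale ordgrp = group G for G (structure) +
  fixes r
  assumes lin: "linear_order_on (carrier G) r"
    and inv_r: "\<And>g h x y. g \<in> carrier G \<Longrightarrow> h \<in> carrier G \<Longrightarrow> x \<in> carrier G \<Longrightarrow> y \<in> carrier G
        \<Longrightarrow> (g, h) \<in> r \<Longrightarrow> (x \<otimes> g \<otimes> y, x \<otimes> h \<otimes> y) \<in> r"
begin

lemma r_trans: "(a,b) \<in> r \<Longrightarrow> (b,c) \<in> r \<Longrightarrow> (a,c) \<in> r"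
  using lin unfolding linear_order_on_def partial_order_on_def preorder_on_def trans_def by blast

lemma r_antisym: "(a,b) \<in> r \<Longrightarrow> (b,a) \<in> r \<Longrightarrow> a = b"
  using lin unfolding linear_order_on_def partial_order_on_def antisym_def by blast

lemma r_total: "a \<in> carrier G \<Longrightarrow> b \<in> carrier G \<Longrightarrow> a \<noteq> b \<Longrightarrow> (a,b) \<in> r \<or> (b,a) \<in> r"
  using lin unfolding linear_order_on_def total_on_def by blast

lemma r_left: "g \<in> carrier G \<Longrightarrow> h \<in> carrier G \<Longrightarrow> x \<in> carrier G \<Longrightarrow> (g, h) \<in> r \<Longrightarrow> (x \<otimes> g, x \<otimes> h) \<in> r"
  using inv_r[of g h x \<one>] by simp

lemma r_right: "g \<in> carrier G \<Longrightarrow> h \<in> carrier G \<Longrightarrow> y \<in> carrier G \<Longrightarrow> (g, h) \<in> r \<Longrightarrow> (g \<otimes> y, h \<otimes> y) \<in> r"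
  using inv_r[of g h \<one> y] by simp

lemma pow_strict:
  assumes g: "g \<in> carrier G" and h: "h \<in> carrier G" and gh: "(g,h) \<in> r" "g \<noteq> h"
  shows "(g [^] Suc n, h [^] Suc n) \<in> r \<and> g [^] Suc n \<noteq> h [^] Suc n"
proof (induction n)
  case 0
  then show ?case using assms by simp
next
  case (Suc n)
  let ?a = "g [^] Suc n" and ?b = "h [^] Suc n"
  have c: "?a \<in> carrier G" "?b \<in> carrier G" using g h by auto
  have 1: "(?a \<otimes> g, ?a \<otimes> h) \<in> r" using r_left[OF g h c(1) gh(1)] .
  have 2: "(?a \<otimes> h, ?b \<otimes> h) \<in> r" using r_right[OF c h] Suc by blast
  have 3: "(?a \<otimes> g, ?b \<otimes> h) \<in> r" using r_trans[OF 1 2] .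
  have 4: "?a \<otimes> g \<noteq> ?b \<otimes> h"
  proof
    assume e: "?a \<otimes> g = ?b \<otimes> h"
    have "?a \<otimes> g = ?a \<otimes> h" using r_antisym[OF 1] 2 e by simp
    then show False using g h c gh by simp
  qed
  have eq1: "g [^] Suc (Suc n) = ?a \<otimes> g" by (rule nat_pow_Suc)
  have eq2: "h [^] Suc (Suc n) = ?b \<otimes> h" by (rule nat_pow_Suc)
  show ?case unfolding eq1 eq2 using 3 4 by blast
qed

lemma root_unique_nat:
  assumes g: "g \<in> carrier G" and h: "h \<in> carrier G" and n: "n > 0" and e: "g [^] n = h [^] (n::nat)"
  shows "g = h"
proof (rule ccontr)
  assume ne: "g \<noteq> h"
  obtain m where m: "n = Suc m" using n by (cases n) auto
  from r_total[OF g h ne] show False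
    using pow_strict[OF g h _ ne, of m] pow_strict[OF h g _ ne[symmetric], of m] e m by auto
qed

lemma root_unique:
  assumes g: "g \<in> carrier G" and h: "h \<in> carrier G" and n: "n \<noteq> 0" and e: "g [^] n = h [^] (n::int)"
  shows "g = h"
proof (cases "n > 0")
  case True
  then have "g [^] nat n = h [^] nat n" using e by (metis pow_nat less_imp_le)
  moreover have "nat n > 0" using True by simp
  ultimately show ?thesis using root_unique_nat[OF g h] by blast
next
  case False
  obtain k where k: "n = - int k" "k > 0" using False n by (intro that[of "nat (-n)"]) auto
  have "inv (g [^] k) = inv (h [^] k)"
    using e unfolding k(1) int_pow_neg_int[OF g] int_pow_neg_int[OF h] .
  then have "inv (inv (g [^] k)) = inv (inv (h [^] k))" by simp
  then have "g [^] k = h [^] k" using g h by simp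
  then show ?thesis using root_unique_nat[OF g h k(2)] by blast
qed

lemma cancel1 [simp]: "b \<in> carrier G \<Longrightarrow> x \<in> carrier G \<Longrightarrow> b \<otimes> (inv b \<otimes> x) = x"
  by (simp add: m_assoc[symmetric])

lemma cancel2 [simp]: "b \<in> carrier G \<Longrightarrow> x \<in> carrier G \<Longrightarrow> inv b \<otimes> (b \<otimes> x) = x"
  by (simp add: m_assoc[symmetric])

lemma conj_pow:
  assumes a: "a \<in> carrier G" and b: "b \<in> carrier G"
  shows "(inv b \<otimes> a \<otimes> b) [^] (n::nat) = inv b \<otimes> a [^] n \<otimes> b"
proof (induction n)
  case 0 then show ?case using b by simp
next
  case (Suc n)
  have "(inv b \<otimes> a \<otimes> b) [^] Suc n = (inv b \<otimes> a [^] n \<otimes> b) \<otimes> (inv b \<otimes> a \<otimes> b)"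
    using Suc by simp
  also have "\<dots> = inv b \<otimes> a [^] n \<otimes> (b \<otimes> inv b) \<otimes> a \<otimes> b"
    using a b by (simp add: m_assoc)
  also have "\<dots> = inv b \<otimes> (a [^] n \<otimes> a) \<otimes> b"
    using a b by (simp add: m_assoc)
  finally show ?case by simp
qed

lemma comm_root_nat:
  assumes a: "a \<in> carrier G" and b: "b \<in> carrier G" and n: "n > 0"
    and c: "a [^] (n::nat) \<otimes> b = b \<otimes> a [^] n"
  shows "a \<otimes> b = b \<otimes> a"
proof -
  have "inv b \<otimes> a [^] n \<otimes> b = inv b \<otimes> (a [^] n \<otimes> b)"
    using a b by (simp add: m_assoc)
  also have "\<dots> = inv b \<otimes> (b \<otimes> a [^] n)" using c by simp
  also have "\<dots> = a [^] n" using a b by (simp add: m_assoc[symmetric])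
  finally have "inv b \<otimes> a [^] n \<otimes> b = a [^] n" .
  then have "(inv b \<otimes> a \<otimes> b) [^] n = a [^] n" using conj_pow[OF a b] by simp
  then have "inv b \<otimes> a \<otimes> b = a" using root_unique_nat[OF _ a n] a b by simp
  then have "b \<otimes> (inv b \<otimes> a \<otimes> b) = b \<otimes> a" by simp
  moreover have "b \<otimes> (inv b \<otimes> a \<otimes> b) = a \<otimes> b" using a b by (simp add: m_assoc[symmetric])
  ultimately show ?thesis by simp
qed

lemma comm_root:
  assumes a: "a \<in> carrier G" and b: "b \<in> carrier G" and n: "n \<noteq> 0"
    and c: "a [^] (n::int) \<otimes> b = b \<otimes> a [^] n"
  shows "a \<otimes> b = b \<otimes> a"
proof (cases "n > 0")
  case True
  then have "a [^] nat n \<otimes> b = b \<otimes> a [^] nat n" using c by (metis pow_nat less_imp_le)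
  moreover have "nat n > 0" using True by simp
  ultimately show ?thesis using comm_root_nat[OF a b] by blast
next
  case False
  obtain k where k: "n = - int k" "k > 0" using False n by (intro that[of "nat (-n)"]) auto
  have x: "inv (a [^] k) \<otimes> b = b \<otimes> inv (a [^] k)"
    using c unfolding k(1) int_pow_neg_int[OF a] .
  have "a [^] k \<otimes> b = b \<otimes> a [^] k"
  proof -
    let ?x = "a [^] k"
    have xc: "?x \<in> carrier G" using a by simp
    have "?x \<otimes> (inv ?x \<otimes> b) \<otimes> ?x = ?x \<otimes> (b \<otimes> inv ?x) \<otimes> ?x" using x by simp
    then show ?thesis using xc b by (simp add: m_assoc)
  qed
  then show ?thesis using comm_root_nat[OF a b k(2)] by blast
qed

lemma pow_comm1:
  assumes x: "x \<in> carrier G" and y: "y \<in> carrier G" and c: "x \<otimes> y = y \<otimes> x"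
  shows "x [^] (i::int) \<otimes> y = y \<otimes> x [^] i"
proof (cases "i < 0")
  case False
  then obtain k where k: "i = int k" by (intro that[of "nat i"]) auto
  show ?thesis unfolding k int_pow_int using group_commutes_pow[OF c x y] .
next
  case True
  then obtain k where k: "i = - int k" by (intro that[of "nat (-i)"]) auto
  let ?z = "x [^] k"
  have z: "?z \<in> carrier G" using x by simp
  have cz: "?z \<otimes> y = y \<otimes> ?z" using group_commutes_pow[OF c x y] .
  have "inv ?z \<otimes> y = inv ?z \<otimes> (y \<otimes> ?z) \<otimes> inv ?z" using z y by (simp add: m_assoc)
  also have "\<dots> = inv ?z \<otimes> (?z \<otimes> y) \<otimes> inv ?z" using cz by simp
  also have "\<dots> = y \<otimes> inv ?z" using z y by (simp add: m_assoc[symmetric])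
  finally show ?thesis unfolding k int_pow_neg_int[OF x] .
qed

lemma pow_comm:
  assumes x: "x \<in> carrier G" and y: "y \<in> carrier G" and c: "x \<otimes> y = y \<otimes> x"
  shows "x [^] (i::int) \<otimes> y [^] (j::int) = y [^] j \<otimes> x [^] i"
proof -
  have h1: "x [^] i \<otimes> y = y \<otimes> x [^] i" using pow_comm1[OF x y c] .
  have "y [^] j \<otimes> x [^] i = x [^] i \<otimes> y [^] j"
    by (rule pow_comm1[OF y _ h1[symmetric]]) (use x in simp)
  then show ?thesis by (rule sym)
qed

lemma cyc2:
  assumes c: "c \<in> carrier G" and g: "g \<in> carrier G" and cg: "c \<otimes> g = g \<otimes> c"
    and m: "m \<noteq> 0" and n: "n \<noteq> 0" and e: "c [^] (m::int) = g [^] (n::int)"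
  shows "\<exists>e\<in>carrier G. generate G {c, g} = generate G {e}"
proof -
  obtain s t :: int where st: "s * m + t * n = gcd m n" using bezout_int[of m n] by blast
  define d where "d = gcd m n"
  have st': "s * m + t * n = d" using st d_def by simp
  have d0: "d \<noteq> 0" using m d_def by simp
  have dm: "d dvd m" "d dvd n" unfolding d_def by simp_all
  obtain m' where m': "m = m' * d" using dm(1) by (metis dvd_def mult.commute)
  obtain n' where n': "n = n' * d" using dm(2) by (metis dvd_def mult.commute)
  have "(c [^] m') [^] d = c [^] (m' * d)" by (rule int_pow_pow[OF c])
  also have "\<dots> = c [^] m" using m' by simp
  also have "\<dots> = g [^] n" by (rule e)
  also have "\<dots> = g [^] (n' * d)" using n' by simp
  also have "\<dots> = (g [^] n') [^] d" by (rule int_pow_pow[OF g, symmetric])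
  finally have "(c [^] m') [^] d = (g [^] n') [^] d" .
  then have r: "c [^] m' = g [^] n'" using root_unique[OF int_pow_closed[OF c] int_pow_closed[OF g] d0] by blast
  have "d * (s * m' + t * n') = s * m + t * n" unfolding m' n' by (simp add: algebra_simps)
  then have "d * (s * m' + t * n') = d * 1" using st' by simp
  then have one: "s * m' + t * n' = 1" using d0 by simp
  define e where "e = c [^] t \<otimes> g [^] s"
  have ec: "e \<in> carrier G" using e_def c g by simp
  have com: "c [^] t \<otimes> g [^] s = g [^] s \<otimes> c [^] t" using pow_comm[OF c g cg] .
  have gs: "g [^] (s * n') = c [^] (m' * s)"
    by (metis c g int_pow_pow mult.commute r)
  have ct: "c [^] (t * m') = g [^] (n' * t)"
    by (metis c g int_pow_pow mult.commute r)
  have "e [^] n' = c [^] (t * n') \<otimes> g [^] (s * n')"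
    unfolding e_def using int_pow_mult_distrib[OF com] c g by (simp add: int_pow_pow)
  also have "\<dots> = c [^] (t * n' + m' * s)" using gs c by (simp add: int_pow_mult)
  also have "\<dots> = c" using one c by (simp add: algebra_simps)
  finally have ce: "c = e [^] n'" by simp
  have "e [^] m' = c [^] (t * m') \<otimes> g [^] (s * m')"
    unfolding e_def using int_pow_mult_distrib[OF com] c g by (simp add: int_pow_pow)
  also have "\<dots> = g [^] (n' * t + s * m')" using ct g by (simp add: int_pow_mult)
  also have "\<dots> = g" using one g by (simp add: algebra_simps)
  finally have ge: "g = e [^] m'" by simp
  have s1: "generate G {c, g} \<subseteq> generate G {e}"
  proof (rule generate_subgroup_incl)
    show "subgroup (generate G {e}) G" using generate_is_subgroup ec by simp
    show "{c, g} \<subseteq> generate G {e}" using ce ge generate_pow[OF ec] by blast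
  qed
  have s2: "generate G {e} \<subseteq> generate G {c, g}"
  proof (rule generate_subgroup_incl)
    have sg: "subgroup (generate G {c, g}) G" using generate_is_subgroup c g by simp
    then show "subgroup (generate G {c, g}) G" .
    have "c [^] t \<in> generate G {c, g}" using subgroup_int_pow_closed[OF sg] generate.incl[of c "{c,g}" G] by simp
    moreover have "g [^] s \<in> generate G {c, g}" using subgroup_int_pow_closed[OF sg] generate.incl[of g "{c,g}" G] by simp
    ultimately show "{e} \<subseteq> generate G {c, g}" unfolding e_def using subgroup.m_closed[OF sg] by simp
  qed
  show ?thesis using s1 s2 ec by blast
qed


lemma main_ind:
  assumes "finite U"
  shows "U \<subseteq> carrier G \<Longrightarrow> \<forall>g\<in>U. \<forall>h\<in>U. commensurable G g h \<Longrightarrow>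
    \<exists>c\<in>carrier G. generate G U = generate G {c}"
  using assms
proof (induction U rule: finite_induct)
  case empty
  have "generate G {} \<subseteq> generate G {\<one>}" by (rule mono_generate) simp
  moreover have "generate G {\<one>} \<subseteq> generate G {}"
    by (rule generate_subgroup_incl) (auto intro: generate.one generate_is_subgroup)
  ultimately show ?case by blast
next
  case (insert g F)
  have g: "g \<in> carrier G" and F: "F \<subseteq> carrier G" using insert.prems by auto
  have comF: "\<forall>a\<in>F. \<forall>b\<in>F. commensurable G a b" using insert.prems by auto
  obtain c where c: "c \<in> carrier G" and cF: "generate G F = generate G {c}"
    using insert.IH[OF F comF] by blast
  have sgF: "subgroup (generate G (insert g F)) G" using generate_is_subgroup g F by simp
  show ?case
  proof (cases "F = {}")
    case True
    then show ?thesis using g by auto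
  next
    case False
    then obtain u where u: "u \<in> F" by blast
    have "u \<in> generate G {c}" using cF u generate.incl[of u F G] by simp
    then obtain k where uk: "u = c [^] (k::int)" using generate_pow[OF c] by blast
    have "commensurable G u g" using insert.prems u by auto
    then obtain x y :: int where xy: "x \<noteq> 0" "y \<noteq> 0" "u [^] x = g [^] y"
      unfolding commensurable_def by blast
    show ?thesis
    proof (cases "k = 0")
      case True
      then have u1: "u = \<one>" using uk by simp
      have "u [^] x = \<one>" unfolding u1 by simp
      then have "g [^] y = \<one>" using xy(3) by simp
      then have "g [^] y = \<one> [^] y" by simp
      then have g1: "g = \<one>" using root_unique[OF g one_closed xy(2)] by blast
      have "generate G (insert g F) \<subseteq> generate G F"
      proof (rule generate_subgroup_incl)
        show "subgroup (generate G F) G" using generate_is_subgroup F by simp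
        show "insert g F \<subseteq> generate G F" using g1 by (auto intro: generate.one generate.incl)
      qed
      moreover have "generate G F \<subseteq> generate G (insert g F)" by (rule mono_generate) auto
      ultimately show ?thesis using cF c by blast
    next
      case False
      have ck: "c [^] (k * x) = g [^] y" using xy(3) uk int_pow_pow[OF c] by simp
      have kx: "k * x \<noteq> 0" using False xy(1) by simp
      have "g [^] y \<otimes> g = g \<otimes> g [^] y"
      proof -
        have "g [^] y \<otimes> g = g [^] (y + 1)" using int_pow_mult[OF g, of y 1] g by simp
        also have "\<dots> = g [^] (1 + y)" by (simp add: add.commute)
        also have "\<dots> = g \<otimes> g [^] y" using int_pow_mult[OF g, of 1 y] g by simp
        finally show ?thesis .
      qed
      then have "c [^] (k * x) \<otimes> g = g \<otimes> c [^] (k * x)" using ck by simp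
      then have cg: "c \<otimes> g = g \<otimes> c" using comm_root[OF c g kx] by blast
      obtain e where e: "e \<in> carrier G" and ce: "generate G {c, g} = generate G {e}"
        using cyc2[OF c g cg kx xy(2) ck] by blast
      have sgcg: "subgroup (generate G {c, g}) G" using generate_is_subgroup c g by simp
      have "generate G (insert g F) \<subseteq> generate G {c, g}"
      proof (rule generate_subgroup_incl[OF _ sgcg])
        have "generate G {c} \<subseteq> generate G {c, g}" by (rule mono_generate) auto
        then have "F \<subseteq> generate G {c, g}" using cF generate.incl[of _ F G] by blast
        then show "insert g F \<subseteq> generate G {c, g}" using generate.incl[of g "{c,g}" G] by blast
      qed
      moreover have "generate G {c, g} \<subseteq> generate G (insert g F)"
      proof (rule generate_subgroup_incl[OF _ sgF])
        have "generate G F \<subseteq> generate G (insert g F)" by (rule mono_generate) auto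
        then have "c \<in> generate G (insert g F)" using cF generate.incl[of c "{c}" G] by blast
        then show "{c, g} \<subseteq> generate G (insert g F)" using generate.incl[of g "insert g F" G] by blast
      qed
      ultimately show ?thesis using ce e by blast
    qed
  qed
qed

end

theorem mainTheorem17:
  fixes G (structure) and U :: "'a set"
  assumes "group G" and "orderable G"
    and "U \<subseteq> carrier G" and "finite U"
    and "\<forall>g\<in>U. \<forall>h\<in>U. commensurable G g h"
  shows "\<exists>c\<in>carrier G. generate G U = generate G {c}"
proof -
  obtain r where r: "linear_order_on (carrier G) r"
    "\<forall>g\<in>carrier G. \<forall>h\<in>carrier G. \<forall>x\<in>carrier G. \<forall>y\<in>carrier G.
        (g, h) \<in> r \<longrightarrow> (x \<otimes> g \<otimes> y, x \<otimes> h \<otimes> y) \<in> r"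
    using assms(2) unfolding orderable_def by blast
  have "ordgrp G r" unfolding ordgrp_def ordgrp_axioms_def using assms(1) r by blast
  then show ?thesis using ordgrp.main_ind assms(3,4,5) by blast
qed

end
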